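(* Let $n\ge2$. (i) For every $\delta>0$, \[ \lim_{\substack{x\to\infty\\ \{\log_2(\gamma_n x)\}\ge\delta}}\ \mathbb{P}\Big\{\frac{S_n}{n}>x\Big\}\,x\,2^{-\{\log_2(\gamma_n x)\}}=1 . \] (ii) For every $c>1$, \[ \lim_{m\to\infty}\ \sup_{\frac{2^m}{\gamma_n}+c\le x<\frac{2^{m+1}}{\gamma_n}}\ \mathbb{P}\Big\{\frac{S_n}{n}>x\Big\}\,x\,2^{-\{\log_2(\gamma_n x)\}}=1+\mathbb{P}\{S_{n-1}>nc\}>1 . \]
   Context: $X_1,X_2,\ldots$ are iid St.~Petersburg random variables: $\mathbb{P}\{X_i=2^k\}=2^{-k}$, $k\in\{1,2,\ldots\}$; $S_n=X_1+\dots+X_n$; $\gamma_n=n/2^{\lceil\log_2 n\rceil}$; $\{y\}$ denotes the fractional part of $y$. In (ii), $m$ runs over the positive integers. *)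

theory Defs
  imports "HOL-Probability.Probability"
begin

definition gam :: "nat \<Rightarrow> real" where
  "gam n = real n / 2 powr (real_of_int \<lceil>log 2 (real n)\<rceil>)"

definition normf :: "nat \<Rightarrow> real \<Rightarrow> real" where
  "normf n x = x * 2 powr (- frac (log 2 (gam n * x)))"

definition st_petersburg_iid :: "'a measure \<Rightarrow> (nat \<Rightarrow> 'a \<Rightarrow> real) \<Rightarrow> bool" where
  "st_petersburg_iid M X \<longleftrightarrow>
     prob_space M \<and>
     prob_space.indep_vars M (\<lambda>_. borel) X {1..} \<and>
     (\<forall>i\<ge>1. \<forall>k::nat\<ge>1. measure M {\<omega>\<in>space M. X i \<omega> = 2 ^ k} = 1 / 2 ^ k)"

definition partial_sum :: "(nat \<Rightarrow> 'a \<Rightarrow> real) \<Rightarrow> nat \<Rightarrow> 'a \<Rightarrow> real" where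
  "partial_sum X n \<omega> = (\<Sum>i=1..n. X i \<omega>)"

end

theory Submission
  imports Defs
begin


primrec FF :: "nat \<Rightarrow> real \<Rightarrow> real" where
  "FF 0 t = (if t < 0 then 1 else 0)"
| "FF (Suc m) t = (\<Sum>k. (1/2)^Suc k * FF m (t - 2^Suc k))"

lemma comb:
  fixes f :: "nat \<Rightarrow> real"
  assumes "\<forall>i\<in>{1..n}. f i \<le> b" "a \<le> b" "n \<ge> 1"
    "\<not>(\<exists>i\<in>{1..n}. \<exists>j\<in>{1..n}. i \<noteq> j \<and> f i \<ge> a \<and> f j \<ge> a)"
  shows "(\<Sum>i=1..n. f i) \<le> b + (real n - 1) * a"
proof (cases "\<exists>i0\<in>{1..n}. f i0 \<ge> a")
  case True
  then obtain i0 where i0: "i0 \<in> {1..n}" "f i0 \<ge> a" by auto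
  have oth: "\<forall>i\<in>{1..n}-{i0}. f i \<le> a" using assms(4) i0 by force
  have "(\<Sum>i=1..n. f i) = f i0 + (\<Sum>i\<in>{1..n}-{i0}. f i)"
    using i0 by (simp add: sum.remove)
  also have "(\<Sum>i\<in>{1..n}-{i0}. f i) \<le> of_nat (card ({1..n}-{i0})) * a"
    by (rule sum_bounded_above) (use oth in auto)
  also have "card ({1..n}-{i0}) = n - 1" using i0 by simp
  finally have "(\<Sum>i=1..n. f i) \<le> f i0 + (real n - 1) * a" using assms(3) by (simp add: of_nat_diff)
  moreover have "f i0 \<le> b" using assms(1) i0 by blast
  ultimately show ?thesis by linarith
next
  case False
  then have "\<forall>i\<in>{1..n}. f i \<le> a" by force
  then have "(\<Sum>i=1..n. f i) \<le> of_nat (card {1..n}) * a" by (intro sum_bounded_above) auto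
  then show ?thesis using assms(2) by (simp add: algebra_simps)
qed

lemma (in prob_space) bonf:
  assumes "finite I" "\<And>i. i \<in> I \<Longrightarrow> A i \<in> events" "q \<ge> 0"
    "\<And>i j. i \<in> I \<Longrightarrow> j \<in> I \<Longrightarrow> i \<noteq> j \<Longrightarrow> prob (A i \<inter> A j) \<le> q"
  shows "prob (\<Union>i\<in>I. A i) \<ge> (\<Sum>i\<in>I. prob (A i)) - real (card I)^2 * q"
  using assms
proof (induction I rule: finite_induct)
  case empty then show ?case by simp
next
  case (insert a I)
  have evI: "\<And>i. i \<in> I \<Longrightarrow> A i \<in> events" using insert.prems(1) by blast
  have ev: "(\<Union>i\<in>I. A i) \<in> events" by (rule sets.finite_UN[OF insert.hyps(1) evI])
  have Aa: "A a \<in> events" using insert.prems(1) by blast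
  have qI: "\<And>i j. i \<in> I \<Longrightarrow> j \<in> I \<Longrightarrow> i \<noteq> j \<Longrightarrow> prob (A i \<inter> A j) \<le> q"
    using insert.prems(3) by blast
  have IH: "prob (\<Union>i\<in>I. A i) \<ge> (\<Sum>i\<in>I. prob (A i)) - real (card I)^2 * q"
    by (rule insert.IH[OF evI insert.prems(2) qI])
  have un: "prob (A a \<union> (\<Union>i\<in>I. A i)) = prob (A a) + prob (\<Union>i\<in>I. A i) - prob (A a \<inter> (\<Union>i\<in>I. A i))"
    by (rule measure_Un3) (simp_all add: fmeasurable_eq_sets Aa ev)
  have "prob (A a \<inter> (\<Union>i\<in>I. A i)) = prob (\<Union>i\<in>I. A a \<inter> A i)" by (simp only: Int_UN_distrib)
  also have "\<dots> \<le> (\<Sum>i\<in>I. prob (A a \<inter> A i))"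
  proof (rule finite_measure_subadditive_finite)
    show "finite I" by (rule insert.hyps(1))
    show "(\<lambda>i. A a \<inter> A i) ` I \<subseteq> events" by (intro image_subsetI sets.Int Aa evI)
  qed
  also have "\<dots> \<le> (\<Sum>i\<in>I. q)"
  proof (rule sum_mono)
    fix i assume "i \<in> I"
    then show "prob (A a \<inter> A i) \<le> q" using insert.prems(3)[of a i] insert.hyps(2) by auto
  qed
  also have "\<dots> = real (card I) * q" by simp
  finally have int: "prob (A a \<inter> (\<Union>i\<in>I. A i)) \<le> real (card I) * q" .
  have sq: "(real (card I)^2 + real (card I)) * q \<le> real (card (insert a I))^2 * q"
    using insert.hyps insert.prems(2) by (intro mult_right_mono) (auto simp: power2_eq_square algebra_simps)
  have u2: "(\<Union>i\<in>insert a I. A i) = A a \<union> (\<Union>i\<in>I. A i)" by simp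
  have s2: "(\<Sum>i\<in>insert a I. prob (A i)) = prob (A a) + (\<Sum>i\<in>I. prob (A i))"
    using insert.hyps by simp
  have "(real (card I)^2 + real (card I)) * q = real (card I)^2 * q + real (card I) * q"
    by (simp add: algebra_simps)
  then show ?case unfolding u2 s2 using un int IH sq by linarith
qed

lemma geom_half_sum: "(\<Sum>k<j. (1/2::real) ^ Suc k) = 1 - 1/2^j"
  by (induction j) (auto simp: field_simps)

locale stp = prob_space M for M :: "'a measure" +
  fixes X :: "nat \<Rightarrow> 'a \<Rightarrow> real"
  assumes indep: "indep_vars (\<lambda>_. borel) X {1..}"
    and dist: "\<And>i k. i \<ge> 1 \<Longrightarrow> k \<ge> (1::nat) \<Longrightarrow> prob {\<omega>\<in>space M. X i \<omega> = 2 ^ k} = 1 / 2 ^ k"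
begin

lemma rv[measurable]: "i \<ge> 1 \<Longrightarrow> X i \<in> borel_measurable M"
  using indep unfolding indep_vars_def by auto

lemma distS: "i \<ge> 1 \<Longrightarrow> prob {\<omega>\<in>space M. X i \<omega> = 2 ^ Suc k} = (1/2) ^ Suc k"
proof -
  assume i: "i \<ge> 1"
  have "prob {\<omega>\<in>space M. X i \<omega> = 2 ^ Suc k} = 1 / 2 ^ Suc k" using dist[OF i, of "Suc k"] by simp
  also have "(1::real) / 2 ^ Suc k = (1/2) ^ Suc k" by (simp only: power_divide power_one)
  finally show ?thesis .
qed

lemma AE_V: assumes "i \<ge> 1" shows "AE \<omega> in M. \<exists>k. X i \<omega> = 2 ^ Suc k"
proof -
  let ?A = "\<lambda>k. {\<omega>\<in>space M. X i \<omega> = 2 ^ Suc k}"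
  have "(\<lambda>k. prob (?A k)) sums prob (\<Union>k. ?A k)"
    by (rule finite_measure_UNION) (use assms in \<open>auto simp: disjoint_family_on_def\<close>)
  moreover have "(\<lambda>k. prob (?A k)) = (\<lambda>k. (1/2) * (1/2)^k)"
    by (rule ext, subst distS[OF assms]) simp
  moreover have "(\<lambda>k. (1/2::real) * (1/2)^k) sums 1"
    using sums_mult[OF geometric_sums[of "1/2::real"], of "1/2"] by simp
  ultimately have "(\<lambda>k. prob (?A k)) sums 1" "(\<lambda>k. prob (?A k)) sums prob (\<Union>k. ?A k)" by simp_all
  then have "prob (\<Union>k. ?A k) = 1" by (rule sums_unique2[symmetric])
  moreover have "(\<Union>k. ?A k) = {\<omega>\<in>space M. \<exists>k. X i \<omega> = 2 ^ Suc k}" by auto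
  ultimately have "prob {\<omega>\<in>space M. \<exists>k. X i \<omega> = 2 ^ Suc k} = 1" by simp
  moreover have "{\<omega>\<in>space M. \<exists>k. X i \<omega> = 2 ^ Suc k} \<in> events"
    using \<open>(\<Union>k. ?A k) = _\<close>[symmetric] assms by auto
  ultimately show ?thesis using prob_eq_1 by auto
qed

lemma AE_nonneg: "i \<ge> 1 \<Longrightarrow> AE \<omega> in M. X i \<omega> \<ge> 0"
  by (rule AE_mp[OF AE_V]) (auto intro!: AE_I2)

lemma tail_le: assumes "i \<ge> 1" shows "prob {\<omega>\<in>space M. X i \<omega> \<le> 2 ^ j} = 1 - 1/2^j"
proof -
  let ?A = "\<lambda>k. {\<omega>\<in>space M. X i \<omega> = 2 ^ Suc k}"
  have "prob {\<omega>\<in>space M. X i \<omega> \<le> 2 ^ j} = prob (\<Union>k\<in>{..<j}. ?A k)"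
  proof (rule measure_eq_AE)
    show "AE x in M. (x \<in> {\<omega> \<in> space M. X i \<omega> \<le> 2 ^ j}) = (x \<in> (\<Union>k\<in>{..<j}. ?A k))"
      using AE_V[OF assms]
    proof (rule AE_mp, intro AE_I2 impI)
      fix x assume "x \<in> space M" "\<exists>k. X i x = 2 ^ Suc k"
      then obtain k where k: "X i x = 2 ^ Suc k" by auto
      have "(2::real) ^ Suc k \<le> 2 ^ j \<longleftrightarrow> Suc k \<le> j" by (rule power_increasing_iff) simp
      then show "(x \<in> {\<omega> \<in> space M. X i \<omega> \<le> 2 ^ j}) = (x \<in> (\<Union>k\<in>{..<j}. ?A k))"
        using k \<open>x \<in> space M\<close> by auto
    qed
  qed (use assms in auto)
  also have "\<dots> = (\<Sum>k<j. prob (?A k))"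
    by (rule finite_measure_finite_Union) (use assms in \<open>auto simp: disjoint_family_on_def\<close>)
  also have "\<dots> = (\<Sum>k<j. (1/2::real)^Suc k)" by (intro sum.cong refl distS[OF assms])
  also have "\<dots> = 1 - 1/2^j" by (rule geom_half_sum)
  finally show ?thesis .
qed

lemma tail_gt: assumes "i \<ge> 1" shows "prob {\<omega>\<in>space M. X i \<omega> > 2 ^ j} = 1/2^j"
proof -
  have "{\<omega>\<in>space M. X i \<omega> > 2 ^ j} = space M - {\<omega>\<in>space M. X i \<omega> \<le> 2 ^ j}" by auto
  then show ?thesis using prob_compl[of "{\<omega>\<in>space M. X i \<omega> \<le> 2 ^ j}"] tail_le[OF assms, of j] assms
    by simp
qed

lemma tail_ge: assumes "i \<ge> 1" shows "prob {\<omega>\<in>space M. X i \<omega> \<ge> 2 ^ Suc j} = 1/2^j"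
proof -
  have "prob {\<omega>\<in>space M. X i \<omega> \<ge> 2 ^ Suc j} = prob {\<omega>\<in>space M. X i \<omega> > 2 ^ j}"
  proof (rule measure_eq_AE)
    show "AE x in M. (x \<in> {\<omega> \<in> space M. X i \<omega> \<ge> 2 ^ Suc j}) = (x \<in> {\<omega>\<in>space M. X i \<omega> > 2 ^ j})"
      using AE_V[OF assms]
    proof (rule AE_mp, intro AE_I2 impI)
      fix x assume "x \<in> space M" "\<exists>k. X i x = 2 ^ Suc k"
      then obtain k where k: "X i x = 2 ^ Suc k" by auto
      have "(2::real) ^ Suc j \<le> 2 ^ Suc k \<longleftrightarrow> Suc j \<le> Suc k" by (rule power_increasing_iff) simp
      moreover have "(2::real) ^ j < 2 ^ Suc k \<longleftrightarrow> j < Suc k" by (rule power_strict_increasing_iff) simp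
      ultimately show "(x \<in> {\<omega> \<in> space M. X i \<omega> \<ge> 2 ^ Suc j}) = (x \<in> {\<omega>\<in>space M. X i \<omega> > 2 ^ j})"
        using k \<open>x \<in> space M\<close> by auto
    qed
  qed (use assms in auto)
  then show ?thesis using tail_gt[OF assms] by simp
qed

lemma pow2_bracket: assumes "(y::real) \<ge> 1" obtains j :: nat where "2 ^ j \<le> y" "y < 2 ^ Suc j"
proof -
  define j where "j = nat \<lfloor>log 2 y\<rfloor>"
  have l0: "log 2 y \<ge> 0" using assms by simp
  have "\<lfloor>log 2 y\<rfloor> = int j" using l0 unfolding j_def by simp
  then have "2 powr (real j) \<le> y \<and> y < 2 powr (real j + 1)"
    using floor_log_eq_powr_iff[of y 2 "int j"] assms by simp
  then have "2 ^ j \<le> y" "y < 2 ^ Suc j"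
    by (simp_all add: powr_realpow[symmetric] powr_add)
  then show ?thesis using that by blast
qed

lemma tail_bound: assumes "i \<ge> 1" "y > 0" shows "prob {\<omega>\<in>space M. X i \<omega> \<ge> y} \<le> 4 / y"
proof (cases "y \<le> 4")
  case True
  then have "prob {\<omega>\<in>space M. X i \<omega> \<ge> y} \<le> 1" by simp
  also have "1 \<le> 4 / y" using True assms by simp
  finally show ?thesis .
next
  case False
  obtain j :: nat where j: "2 ^ j \<le> y" "y < 2 ^ Suc j" using pow2_bracket[of y] False by auto
  have "j \<noteq> 0" using j False by (cases j) auto
  then obtain l where l: "j = Suc l" by (cases j) auto
  have "prob {\<omega>\<in>space M. X i \<omega> \<ge> y} \<le> prob {\<omega>\<in>space M. X i \<omega> \<ge> 2 ^ Suc l}"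
    using j l assms by (intro finite_measure_mono) auto
  also have "\<dots> = 1/2^l" by (rule tail_ge[OF assms(1)])
  also have "\<dots> \<le> 4 / y" using j l assms by (simp add: field_simps)
  finally show ?thesis .
qed

lemma pair_indep: assumes "i \<ge> 1" "j \<ge> 1" "i \<noteq> j"
  and that: "A \<in> sets borel" "B \<in> sets borel"
  shows "prob {\<omega>\<in>space M. X i \<omega> \<in> A \<and> X j \<omega> \<in> B} = prob {\<omega>\<in>space M. X i \<omega> \<in> A} * prob {\<omega>\<in>space M. X j \<omega> \<in> B}"
proof -
  have "indep_vars (\<lambda>_. borel) X (insert i {j})"
    using indep_vars_subset[OF indep] assms by auto
  from indep_vars_sum[OF _ _ this] assms have "indep_var borel (X i) borel (\<lambda>\<omega>. \<Sum>i\<in>{j}. X i \<omega>)" by auto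
  then have "indep_var borel (X i) borel (X j)" by simp
  from prob_indep_random_variable[OF this that] show ?thesis .
qed

lemma pair_bound: assumes "i \<ge> 1" "j \<ge> 1" "i \<noteq> j" "a > 0"
  shows "prob {\<omega>\<in>space M. X i \<omega> \<ge> a \<and> X j \<omega> \<ge> a} \<le> 16 / a^2"
proof -
  have "prob {\<omega>\<in>space M. X i \<omega> \<ge> a \<and> X j \<omega> \<ge> a} = prob {\<omega>\<in>space M. X i \<omega> \<in> {a..} \<and> X j \<omega> \<in> {a..}}"
    by simp
  also have "\<dots> = prob {\<omega>\<in>space M. X i \<omega> \<in> {a..}} * prob {\<omega>\<in>space M. X j \<omega> \<in> {a..}}"
    by (rule pair_indep) (use assms in auto)
  also have "\<dots> \<le> (4/a) * (4/a)"
    using tail_bound[of i a] tail_bound[of j a] assms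
    by (intro mult_mono) auto
  finally show ?thesis by (simp add: power2_eq_square)
qed

lemma two_bound: assumes "a > 0"
  shows "prob {\<omega>\<in>space M. \<exists>i\<in>{1..n}. \<exists>j\<in>{1..n}. i \<noteq> j \<and> X i \<omega> \<ge> a \<and> X j \<omega> \<ge> a} \<le> real n ^ 2 * (16 / a^2)"
proof -
  let ?E = "\<lambda>p. {\<omega>\<in>space M. fst p \<noteq> snd p \<and> X (fst p) \<omega> \<ge> a \<and> X (snd p) \<omega> \<ge> a}"
  have eq: "{\<omega>\<in>space M. \<exists>i\<in>{1..n}. \<exists>j\<in>{1..n}. i \<noteq> j \<and> X i \<omega> \<ge> a \<and> X j \<omega> \<ge> a} = (\<Union>p\<in>{1..n}\<times>{1..n}. ?E p)"
    by force
  have "prob (\<Union>p\<in>{1..n}\<times>{1..n}. ?E p) \<le> (\<Sum>p\<in>{1..n}\<times>{1..n}. prob (?E p))"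
  proof (rule finite_measure_subadditive_finite)
    show "?E ` ({1..n}\<times>{1..n}) \<subseteq> events"
    proof (rule image_subsetI)
      fix p assume "p \<in> {1..n}\<times>{1..n}"
      then have [measurable]: "X (fst p) \<in> borel_measurable M" "X (snd p) \<in> borel_measurable M" by auto
      show "?E p \<in> events" by measurable
    qed
  qed simp
  also have "\<dots> \<le> (\<Sum>p\<in>{1..n}\<times>{1..n}. 16 / a^2)"
  proof (rule sum_mono)
    fix p assume p: "p \<in> {1..n}\<times>{1..n}"
    show "prob (?E p) \<le> 16 / a^2"
    proof (cases "fst p = snd p")
      case True then show ?thesis by simp
    next
      case False
      then show ?thesis using pair_bound[of "fst p" "snd p" a] p assms by auto
    qed
  qed
  also have "\<dots> = real n ^ 2 * (16 / a^2)" by (simp add: power2_eq_square)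
  finally show ?thesis using eq by simp
qed

lemma sumdist: assumes "finite J" "J \<subseteq> {1..}"
  shows "prob {\<omega>\<in>space M. (\<Sum>j\<in>J. X j \<omega>) > t} = FF (card J) t"
  using assms
proof (induction J arbitrary: t rule: finite_induct)
  case empty
  then show ?case by (cases "t < 0") (auto simp: prob_space)
next
  case (insert a J)
  have a1: "a \<ge> 1" using insert by auto
  have [measurable]: "X a \<in> borel_measurable M" using a1 by simp
  have [measurable]: "(\<lambda>\<omega>. \<Sum>j\<in>J. X j \<omega>) \<in> borel_measurable M"
    using insert by (intro borel_measurable_sum) auto
  have ind: "indep_var borel (X a) borel (\<lambda>\<omega>. \<Sum>j\<in>J. X j \<omega>)"
    by (rule indep_vars_sum[OF insert(1,2) indep_vars_subset[OF indep]]) (use insert in auto)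
  have [measurable]: "(\<lambda>\<omega>. \<Sum>j\<in>insert a J. X j \<omega>) \<in> borel_measurable M"
    using insert by (intro borel_measurable_sum) auto
  define B where "B k = {\<omega>\<in>space M. X a \<omega> \<in> {2^Suc k} \<and> (\<Sum>j\<in>J. X j \<omega>) \<in> {t - 2^Suc k<..}}" for k
  define E where "E = {\<omega>\<in>space M. (\<Sum>j\<in>insert a J. X j \<omega>) > t}"
  define g where "g k = (1/2::real)^Suc k * FF (card J) (t - 2^Suc k)" for k
  have Bev: "B k \<in> events" for k
  proof -
    have "B k = (X a -` {2^Suc k} \<inter> space M) \<inter> ((\<lambda>\<omega>. \<Sum>j\<in>J. X j \<omega>) -` {t - 2^Suc k<..} \<inter> space M)"
      unfolding B_def by auto
    also have "\<dots> \<in> events"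
      by (intro sets.Int measurable_sets[of _ M borel]) simp_all
    finally show ?thesis .
  qed
  have Eev: "E \<in> events"
  proof -
    have "E = (\<lambda>\<omega>. \<Sum>j\<in>insert a J. X j \<omega>) -` {t<..} \<inter> space M"
      unfolding E_def by auto
    also have "\<dots> \<in> events"
      by (intro measurable_sets[of _ M borel]) simp_all
    finally show ?thesis .
  qed
  have e1: "prob E = prob (\<Union>k. B k)"
  proof (rule measure_eq_AE)
    show "AE x in M. (x \<in> E) = (x \<in> (\<Union>k. B k))"
      using AE_V[OF a1]
    proof (rule AE_mp, intro AE_I2 impI)
      fix x assume x: "x \<in> space M" "\<exists>k. X a x = 2 ^ Suc k"
      then obtain k0 where k0: "X a x = 2 ^ Suc k0" by auto
      have s: "(\<Sum>j\<in>insert a J. X j x) = X a x + (\<Sum>j\<in>J. X j x)" using insert by simp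
      show "(x \<in> E) = (x \<in> (\<Union>k. B k))"
      proof
        assume "x \<in> E"
        then have "x \<in> B k0" using x k0 s unfolding E_def B_def by auto
        then show "x \<in> (\<Union>k. B k)" by blast
      next
        assume "x \<in> (\<Union>k. B k)"
        then obtain k where "x \<in> B k" by blast
        then show "x \<in> E" using s unfolding E_def B_def by auto
      qed
    qed
    show "E \<in> events" by (rule Eev)
    show "(\<Union>k. B k) \<in> events" using Bev by blast
  qed
  have su: "(\<lambda>k. prob (B k)) sums prob (\<Union>k. B k)"
  proof (rule finite_measure_UNION)
    show "range B \<subseteq> events" using Bev by blast
    show "disjoint_family B" unfolding disjoint_family_on_def B_def by auto
  qed
  have p: "prob (B k) = g k" for k
  proof -
    have "prob (B k) = prob {\<omega>\<in>space M. X a \<omega> \<in> {2^Suc k}} * prob {\<omega>\<in>space M. (\<Sum>j\<in>J. X j \<omega>) \<in> {t - 2^Suc k<..}}"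
      unfolding B_def by (rule prob_indep_random_variable[OF ind]) simp_all
    also have "prob {\<omega>\<in>space M. X a \<omega> \<in> {2^Suc k}} = (1/2)^Suc k" using distS[OF a1] by simp
    also have "prob {\<omega>\<in>space M. (\<Sum>j\<in>J. X j \<omega>) \<in> {t - 2^Suc k<..}} = FF (card J) (t - 2^Suc k)"
      using insert by simp
    finally show ?thesis unfolding g_def .
  qed
  have fe: "(\<lambda>k. prob (B k)) = g" by (rule ext) (rule p)
  have "g sums prob E" using su unfolding fe e1 .
  then have "prob E = suminf g" by (rule sums_unique)
  also have "suminf g = FF (card (insert a J)) t"
  proof -
    have c: "card (insert a J) = Suc (card J)" by (rule card_insert_disjoint[OF insert(1,2)])
    have gl: "g = (\<lambda>k. (1/2::real)^Suc k * FF (card J) (t - 2^Suc k))" by (rule ext) (rule g_def)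
    show ?thesis unfolding c FF.simps(2) gl by (rule refl)
  qed
  finally show ?case unfolding E_def .
qed

end


lemma gam_eq: assumes "n \<ge> 2" shows "gam n = real n / 2 ^ nat \<lceil>log 2 (real n)\<rceil>"
proof -
  have "log 2 (real n) \<ge> 0" using assms by simp
  then have "\<lceil>log 2 (real n)\<rceil> \<ge> 0" by linarith
  then have "(2::real) powr (real_of_int \<lceil>log 2 (real n)\<rceil>) = 2 ^ nat \<lceil>log 2 (real n)\<rceil>"
    by (metis of_nat_nat powr_realpow zero_less_numeral)
  then show ?thesis unfolding gam_def by simp
qed

lemma normf_eq: assumes n: "n \<ge> 2" and x: "x > 0" and j: "2 ^ j \<le> real n * x" "real n * x < 2 ^ Suc j"
  shows "frac (log 2 (gam n * x)) = log 2 (real n * x) - j" and "normf n x = 2 ^ j / real n"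
proof -
  define K where "K = nat \<lceil>log 2 (real n)\<rceil>"
  have nx: "real n * x > 0" using n x by simp
  have g: "gam n * x = real n * x / 2 ^ K" unfolding gam_eq[OF n] K_def by simp
  have "log 2 (gam n * x) = log 2 (real n * x) - log 2 (2 ^ K)"
    unfolding g using nx n x by (simp add: log_divide)
  also have "log 2 (2 ^ K) = real K" by (simp add: log_nat_power)
  finally have l: "log 2 (gam n * x) = log 2 (real n * x) + of_int (- int K)" by simp
  have fl: "\<lfloor>log 2 (real n * x)\<rfloor> = int j"
    using floor_log_eq_powr_iff[of "real n * x" 2 "int j"] nx j
    by (simp add: powr_realpow powr_add)
  show fr: "frac (log 2 (gam n * x)) = log 2 (real n * x) - j"
    unfolding l frac_add_of_int_right by (simp add: frac_def fl)
  have "normf n x = x * 2 powr (real j - log 2 (real n * x))"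
    unfolding normf_def fr by simp
  also have "\<dots> = x * (2 powr real j / 2 powr (log 2 (real n * x)))"
    by (simp add: powr_diff)
  also have "\<dots> = x * (2 ^ j / (real n * x))" using nx by (simp add: powr_realpow)
  also have "\<dots> = 2 ^ j / real n" using x by simp
  finally show "normf n x = 2 ^ j / real n" .
qed

context stp
begin

lemma AE_all: "AE \<omega> in M. \<forall>i\<in>{1..n}. (\<exists>k. X i \<omega> = 2 ^ Suc k) \<and> X i \<omega> \<ge> 0"
proof (rule AE_finite_allI)
  fix i assume "i \<in> {1..n}"
  then have i: "i \<ge> 1" by simp
  show "AE \<omega> in M. (\<exists>k. X i \<omega> = 2 ^ Suc k) \<and> X i \<omega> \<ge> 0"
    by (rule AE_mp[OF AE_V[OF i]]) (auto intro!: AE_I2)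
qed simp

lemma ev_pred: assumes "i \<ge> 1" "S \<in> sets borel" shows "{\<omega>\<in>space M. X i \<omega> \<in> S} \<in> events"
proof -
  have "{\<omega>\<in>space M. X i \<omega> \<in> S} = X i -` S \<inter> space M" by auto
  then show ?thesis using measurable_sets[OF rv[OF assms(1)] assms(2)] by simp
qed

lemma ev_gt: "i \<ge> 1 \<Longrightarrow> {\<omega>\<in>space M. X i \<omega> > b} \<in> events"
  using ev_pred[of i "{b<..}"] by simp
lemma ev_ge: "i \<ge> 1 \<Longrightarrow> {\<omega>\<in>space M. X i \<omega> \<ge> b} \<in> events"
  using ev_pred[of i "{b..}"] by simp
lemma ev_eq: "i \<ge> 1 \<Longrightarrow> {\<omega>\<in>space M. X i \<omega> = b} \<in> events"
  using ev_pred[of i "{b}"] by simp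

lemma Sn_meas: "(\<lambda>\<omega>. \<Sum>i=1..n. X i \<omega>) \<in> borel_measurable M"
  by (intro borel_measurable_sum) simp

lemma two_ev: "{\<omega>\<in>space M. \<exists>i\<in>{1..n}. \<exists>j\<in>{1..n}. i \<noteq> j \<and> X i \<omega> \<ge> a \<and> X j \<omega> \<ge> a} \<in> events"
proof -
  define E where "E p = (if fst p \<noteq> snd p then {\<omega>\<in>space M. X (fst p) \<omega> \<ge> a} \<inter> {\<omega>\<in>space M. X (snd p) \<omega> \<ge> a} else {})" for p
  have eq: "{\<omega>\<in>space M. \<exists>i\<in>{1..n}. \<exists>j\<in>{1..n}. i \<noteq> j \<and> X i \<omega> \<ge> a \<and> X j \<omega> \<ge> a} = (\<Union>p\<in>{1..n}\<times>{1..n}. E p)"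
    unfolding E_def by force
  have "(\<Union>p\<in>{1..n}\<times>{1..n}. E p) \<in> events"
  proof (rule sets.finite_UN)
    show "finite ({1..n}\<times>{1..n})" by simp
    fix p assume p: "p \<in> {1..n}\<times>{1..n}"
    show "E p \<in> events"
    proof (cases "fst p \<noteq> snd p")
      case True
      have "fst p \<ge> 1" "snd p \<ge> 1" using p by auto
      then show ?thesis using True unfolding E_def by (simp add: sets.Int ev_ge)
    next
      case False then show ?thesis unfolding E_def by simp
    qed
  qed
  then show ?thesis using eq by simp
qed

lemma upper_i:
  assumes n: "n \<ge> 2" and x: "x > 0" and r: "0 < r" "r < 1" and j: "2 ^ j \<le> r * real n * x"
  shows "prob {\<omega>\<in>space M. (\<Sum>i=1..n. X i \<omega>) > real n * x}
          \<le> real n / 2 ^ j + real n ^ 2 * (16 / (r * (1 - r) * x)^2)"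
proof -
  define a where "a = r * (1 - r) * x"
  define b where "b = r * real n * x"
  have a0: "a > 0" unfolding a_def using r x by simp
  have ab: "a \<le> b" unfolding a_def b_def using r x n
    by (intro mult_right_mono) (auto intro: mult_left_mono)
  let ?U = "\<Union>i\<in>{1..n}. {\<omega>\<in>space M. X i \<omega> > b}"
  let ?T = "{\<omega>\<in>space M. \<exists>i\<in>{1..n}. \<exists>j\<in>{1..n}. i \<noteq> j \<and> X i \<omega> \<ge> a \<and> X j \<omega> \<ge> a}"
  have Uev: "?U \<in> events"
    by (intro sets.finite_UN) (auto intro!: ev_gt)
  have Tev: "?T \<in> events" by (rule two_ev)
  have sub: "{\<omega>\<in>space M. (\<Sum>i=1..n. X i \<omega>) > real n * x} \<subseteq> ?U \<union> ?T"
  proof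
    fix \<omega> assume w: "\<omega> \<in> {\<omega>\<in>space M. (\<Sum>i=1..n. X i \<omega>) > real n * x}"
    show "\<omega> \<in> ?U \<union> ?T"
    proof (rule ccontr)
      assume "\<omega> \<notin> ?U \<union> ?T"
      then have h1: "\<forall>i\<in>{1..n}. X i \<omega> \<le> b" and
        h2: "\<not>(\<exists>i\<in>{1..n}. \<exists>j\<in>{1..n}. i \<noteq> j \<and> X i \<omega> \<ge> a \<and> X j \<omega> \<ge> a)"
        using w by (auto simp: not_less)
      have "(\<Sum>i=1..n. X i \<omega>) \<le> b + (real n - 1) * a"
        by (rule comb[OF h1 ab _ h2]) (use n in simp)
      also have "\<dots> < real n * x"
      proof -
        have "(real n - 1) * r \<le> real n - 1" using r n by (intro mult_left_le) auto
        then have "(real n - 1) * r < real n" by linarith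
        then have "(real n - 1) * r * (1 - r) * x < real n * (1 - r) * x"
          using r x by (intro mult_strict_right_mono) auto
        then show ?thesis unfolding a_def b_def by (simp add: algebra_simps)
      qed
      finally show False using w by simp
    qed
  qed
  have "prob {\<omega>\<in>space M. (\<Sum>i=1..n. X i \<omega>) > real n * x} \<le> prob (?U \<union> ?T)"
    by (rule finite_measure_mono[OF sub]) (use Uev Tev in blast)
  also have "\<dots> \<le> prob ?U + prob ?T" by (rule measure_Un_le[OF Uev Tev])
  also have "prob ?U \<le> (\<Sum>i\<in>{1..n}. prob {\<omega>\<in>space M. X i \<omega> > b})"
    by (rule finite_measure_subadditive_finite) (auto intro!: ev_gt)
  also have "\<dots> \<le> (\<Sum>i\<in>{1..n}. 1 / 2 ^ j)"
  proof (rule sum_mono)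
    fix i assume i: "i \<in> {1..n}"
    have "prob {\<omega>\<in>space M. X i \<omega> > b} \<le> prob {\<omega>\<in>space M. X i \<omega> > 2 ^ j}"
      using j i unfolding b_def by (intro finite_measure_mono) (auto intro!: ev_gt)
    also have "\<dots> = 1 / 2 ^ j" using tail_gt i by simp
    finally show "prob {\<omega>\<in>space M. X i \<omega> > b} \<le> 1 / 2 ^ j" .
  qed
  also have "prob ?T \<le> real n ^ 2 * (16 / a^2)" by (rule two_bound[OF a0])
  finally show ?thesis unfolding a_def by simp
qed


lemma ev_f: assumes "f \<in> borel_measurable M" "S \<in> sets borel" shows "{\<omega>\<in>space M. f \<omega> \<in> S} \<in> events"
proof -
  have "{\<omega>\<in>space M. f \<omega> \<in> S} = f -` S \<inter> space M" by auto
  then show ?thesis using measurable_sets[OF assms] by simp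
qed

lemma evS_gt: "{\<omega>\<in>space M. (\<Sum>i=1..n. X i \<omega>) > c} \<in> events"
  using ev_f[OF Sn_meas, of "{c<..}"] by simp

lemma lower_i:
  assumes n: "n \<ge> 1" and j: "real n * x < 2 ^ Suc j"
  shows "prob {\<omega>\<in>space M. (\<Sum>i=1..n. X i \<omega>) > real n * x} \<ge> real n / 2 ^ j - real n ^ 2 * (1 / 2 ^ j)^2"
proof -
  define A where "A i = {\<omega>\<in>space M. X i \<omega> \<ge> 2 ^ Suc j}" for i
  have Aev: "A i \<in> events" if "i \<in> {1..n}" for i using that unfolding A_def by (intro ev_ge) simp
  have q: "prob (A i \<inter> A k) \<le> (1 / 2 ^ j)^2" if "i \<in> {1..n}" "k \<in> {1..n}" "i \<noteq> k" for i k
  proof -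
    have "A i \<inter> A k = {\<omega>\<in>space M. X i \<omega> \<in> {2 ^ Suc j..} \<and> X k \<omega> \<in> {2 ^ Suc j..}}"
      unfolding A_def by auto
    then have "prob (A i \<inter> A k) = prob {\<omega>\<in>space M. X i \<omega> \<in> {2 ^ Suc j..}} * prob {\<omega>\<in>space M. X k \<omega> \<in> {2 ^ Suc j..}}"
      using pair_indep[of i k "{2 ^ Suc j..}" "{2 ^ Suc j..}"] that by simp
    also have "\<dots> = (1 / 2 ^ j)^2" using tail_ge[of i j] tail_ge[of k j] that by (simp add: power2_eq_square)
    finally show ?thesis by simp
  qed
  have "prob (\<Union>i\<in>{1..n}. A i) \<ge> (\<Sum>i\<in>{1..n}. prob (A i)) - real (card {1..n})^2 * (1 / 2 ^ j)^2"
    by (rule bonf) (use Aev q in auto)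
  moreover have "(\<Sum>i\<in>{1..n}. prob (A i)) = real n / 2 ^ j"
    using tail_ge unfolding A_def by simp
  moreover have "prob (\<Union>i\<in>{1..n}. A i) \<le> prob {\<omega>\<in>space M. (\<Sum>i=1..n. X i \<omega>) > real n * x}"
  proof (rule finite_measure_mono_AE)
    show "AE \<omega> in M. \<omega> \<in> (\<Union>i\<in>{1..n}. A i) \<longrightarrow> \<omega> \<in> {\<omega>\<in>space M. (\<Sum>i=1..n. X i \<omega>) > real n * x}"
      using AE_all[of n]
    proof (rule AE_mp, intro AE_I2 impI)
      fix \<omega> assume w: "\<omega> \<in> space M" "\<forall>i\<in>{1..n}. (\<exists>k. X i \<omega> = 2 ^ Suc k) \<and> X i \<omega> \<ge> 0"
        "\<omega> \<in> (\<Union>i\<in>{1..n}. A i)"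
      then obtain i where i: "i \<in> {1..n}" "X i \<omega> \<ge> 2 ^ Suc j" unfolding A_def by auto
      have "X i \<omega> \<le> (\<Sum>i=1..n. X i \<omega>)"
        by (rule member_le_sum) (use i w in auto)
      then show "\<omega> \<in> {\<omega>\<in>space M. (\<Sum>i=1..n. X i \<omega>) > real n * x}" using i j w by auto
    qed
    show "{\<omega>\<in>space M. (\<Sum>i=1..n. X i \<omega>) > real n * x} \<in> events" by (rule evS_gt)
  qed
  ultimately show ?thesis by simp
qed

lemma alg1: "(y::real) > 0 \<Longrightarrow> x > 0 \<Longrightarrow> a * (a * x) * (16 / (y * x)^2) = 16 * a^2 / y^2 / x"
  by (simp add: field_simps power2_eq_square)

lemma tendsto_inv_at_top: "((\<lambda>x::real. C / x) \<longlongrightarrow> 0) at_top"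
  by (rule tendsto_divide_0[OF tendsto_const filterlim_at_top_imp_at_infinity[OF filterlim_ident]])

lemma part_i:
  assumes n: "n \<ge> 2" and d: "\<delta> > 0"
  shows "((\<lambda>x. prob {\<omega>\<in>space M. (\<Sum>i=1..n. X i \<omega>) / real n > x} * normf n x) \<longlongrightarrow> 1)
           (at_top \<sqinter> principal {x. frac (log 2 (gam n * x)) \<ge> \<delta>})"
proof -
  define r where "r = (2::real) powr (- \<delta>)"
  have r0: "0 < r" unfolding r_def by simp
  have r1: "r < 1" unfolding r_def using d by (simp add: powr_less_one)
  define C where "C = 16 * real n ^ 2 / (r * (1 - r))^2"
  let ?g = "\<lambda>x. prob {\<omega>\<in>space M. (\<Sum>i=1..n. X i \<omega>) / real n > x} * normf n x"
  let ?F = "at_top \<sqinter> principal {x. frac (log 2 (gam n * x)) \<ge> \<delta>}"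
  have bounds: "1 - 2 / x \<le> ?g x \<and> ?g x \<le> 1 + C / x" if x1: "x \<ge> 1" and fr: "frac (log 2 (gam n * x)) \<ge> \<delta>" for x
  proof -
    have x0: "x > 0" using x1 by simp
    have nx1: "real n * x \<ge> 1" using mult_mono[of 1 "real n" 1 x] n x1 by simp
    obtain j where j: "2 ^ j \<le> real n * x" "real n * x < 2 ^ Suc j" using pow2_bracket[OF nx1] by blast
    note ne = normf_eq[OF n x0 j]
    have nxpos: "real n * x > 0" using n x0 by simp
    have "real j \<le> log 2 (real n * x) - \<delta>" using fr ne(1) by simp
    then have "2 powr real j \<le> 2 powr (log 2 (real n * x) - \<delta>)" by simp
    also have "\<dots> = r * (real n * x)" unfolding r_def using nxpos by (simp add: powr_diff powr_minus divide_inverse)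
    finally have jr: "2 ^ j \<le> r * real n * x" by (simp add: powr_realpow mult.assoc)
    have set_eq: "{\<omega>\<in>space M. (\<Sum>i=1..n. X i \<omega>) / real n > x} = {\<omega>\<in>space M. (\<Sum>i=1..n. X i \<omega>) > real n * x}"
      using n by (auto simp: field_simps)
    define P where "P = prob {\<omega>\<in>space M. (\<Sum>i=1..n. X i \<omega>) > real n * x}"
    have g: "?g x = P * (2 ^ j / real n)" unfolding set_eq P_def ne(2) ..
    have up: "P \<le> real n / 2 ^ j + real n ^ 2 * (16 / (r * (1 - r) * x)^2)"
      unfolding P_def by (rule upper_i[OF n x0 r0 r1 jr])
    have lo: "P \<ge> real n / 2 ^ j - real n ^ 2 * (1 / 2 ^ j)^2"
      unfolding P_def by (rule lower_i) (use n j in auto)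
    have pj: "(2::real) ^ j > 0" by simp
    have npos: "real n > 0" using n by simp
    have "P * (2 ^ j / real n) \<le> (real n / 2 ^ j + real n ^ 2 * (16 / (r * (1 - r) * x)^2)) * (2 ^ j / real n)"
      using up pj npos by (intro mult_right_mono) auto
    also have "\<dots> = 1 + real n * 2 ^ j * (16 / (r * (1 - r) * x)^2)"
      using pj npos by (simp add: field_simps power2_eq_square)
    also have "\<dots> \<le> 1 + real n * (real n * x) * (16 / (r * (1 - r) * x)^2)"
      using j(1) npos by (intro add_left_mono mult_right_mono mult_left_mono) auto
    also have "\<dots> = 1 + C / x"
    proof -
      have rr: "r * (1 - r) > 0" using r0 r1 by simp
      show ?thesis unfolding C_def using alg1[OF rr x0, of "real n"] by simp
    qed
    finally have U: "?g x \<le> 1 + C / x" unfolding g .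
    have "P * (2 ^ j / real n) \<ge> (real n / 2 ^ j - real n ^ 2 * (1 / 2 ^ j)^2) * (2 ^ j / real n)"
      using lo pj npos by (intro mult_right_mono) auto
    moreover have "(real n / 2 ^ j - real n ^ 2 * (1 / 2 ^ j)^2) * (2 ^ j / real n) = 1 - real n / 2 ^ j"
      using pj npos by (simp add: field_simps power2_eq_square)
    moreover have "real n / 2 ^ j \<le> 2 / x"
      using j(2) x0 pj by (simp add: field_simps)
    ultimately have L: "?g x \<ge> 1 - 2 / x" unfolding g by linarith
    show ?thesis using U L by simp
  qed
  have ev: "eventually (\<lambda>x. 1 - 2 / x \<le> ?g x \<and> ?g x \<le> 1 + C / x) ?F"
    unfolding eventually_inf_principal
    using eventually_ge_at_top[of "1::real"] by eventually_elim (use bounds in auto)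
  have l1: "((\<lambda>x::real. 1 - 2 / x) \<longlongrightarrow> 1) ?F"
    using tendsto_mono[OF inf_le1 tendsto_diff[OF tendsto_const tendsto_inv_at_top[of 2]]] by simp
  have l2: "((\<lambda>x::real. 1 + C / x) \<longlongrightarrow> 1) ?F"
    using tendsto_mono[OF inf_le1 tendsto_add[OF tendsto_const tendsto_inv_at_top[of C]]] by simp
  show ?thesis
    by (rule tendsto_sandwich[OF _ _ l1 l2]) (use ev in \<open>auto elim: eventually_mono\<close>)
qed

end


context stp
begin

lemma others_meas: "(\<lambda>\<omega>. \<Sum>j\<in>{1..n}-{i}. X j \<omega>) \<in> borel_measurable M"
  by (intro borel_measurable_sum) simp

lemma ev_B: assumes "i \<ge> 1"
  shows "{\<omega>\<in>space M. X i \<omega> = v \<and> (\<Sum>j\<in>{1..n}-{i}. X j \<omega>) > t} \<in> events"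
proof -
  have "{\<omega>\<in>space M. X i \<omega> = v \<and> (\<Sum>j\<in>{1..n}-{i}. X j \<omega>) > t} =
        {\<omega>\<in>space M. X i \<omega> = v} \<inter> {\<omega>\<in>space M. (\<Sum>j\<in>{1..n}-{i}. X j \<omega>) \<in> {t<..}}" by auto
  also have "\<dots> \<in> events" using ev_eq[OF assms] ev_f[OF others_meas[of n i], of "{t<..}"] by (intro sets.Int) auto
  finally show ?thesis .
qed

lemma Bi_prob: assumes n: "n \<ge> 1" and i: "i \<in> {1..n}"
  shows "prob {\<omega>\<in>space M. X i \<omega> = 2 ^ Suc e \<and> (\<Sum>j\<in>{1..n}-{i}. X j \<omega>) > t} = (1/2) ^ Suc e * FF (n - 1) t"
proof -
  have i1: "i \<ge> 1" using i by simp
  have ind: "indep_var borel (X i) borel (\<lambda>\<omega>. \<Sum>j\<in>{1..n}-{i}. X j \<omega>)"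
    by (rule indep_vars_sum[OF _ _ indep_vars_subset[OF indep]]) (use i in auto)
  have "prob {\<omega>\<in>space M. X i \<omega> = 2 ^ Suc e \<and> (\<Sum>j\<in>{1..n}-{i}. X j \<omega>) > t}
      = prob {\<omega>\<in>space M. X i \<omega> \<in> {2 ^ Suc e} \<and> (\<Sum>j\<in>{1..n}-{i}. X j \<omega>) \<in> {t<..}}" by simp
  also have "\<dots> = prob {\<omega>\<in>space M. X i \<omega> \<in> {2 ^ Suc e}} * prob {\<omega>\<in>space M. (\<Sum>j\<in>{1..n}-{i}. X j \<omega>) \<in> {t<..}}"
    by (rule prob_indep_random_variable[OF ind]) simp_all
  also have "prob {\<omega>\<in>space M. X i \<omega> \<in> {2 ^ Suc e}} = (1/2) ^ Suc e" using distS[OF i1] by simp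
  also have "prob {\<omega>\<in>space M. (\<Sum>j\<in>{1..n}-{i}. X j \<omega>) \<in> {t<..}} = FF (card ({1..n}-{i})) t"
  proof -
    have sub: "{1..n}-{i} \<subseteq> {1..}" by auto
    show ?thesis using sumdist[OF _ sub, of t] by simp
  qed
  also have "card ({1..n}-{i}) = n - 1" using i by simp
  finally show ?thesis .
qed

lemma upper_ii:
  assumes n: "n \<ge> 2" and c: "c > 0" and N: "2 ^ Suc e > real n * c"
  shows "prob {\<omega>\<in>space M. (\<Sum>i=1..n. X i \<omega>) > 2 ^ Suc e + real n * c}
     \<le> real n / 2 ^ Suc e + real n * FF (n - 1) (real n * c) / 2 ^ Suc e
        + real n ^ 2 * (16 / (2 ^ Suc e / (2 * real n))^2)"
proof -
  define N :: real where "N = 2 ^ Suc e"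
  define a where "a = N / (2 * real n)"
  have N0: "N > 0" unfolding N_def by simp
  have a0: "a > 0" unfolding a_def using N0 n by simp
  let ?U1 = "\<Union>i\<in>{1..n}. {\<omega>\<in>space M. X i \<omega> \<ge> 2 ^ Suc (Suc e)}"
  let ?U2 = "\<Union>i\<in>{1..n}. {\<omega>\<in>space M. X i \<omega> = 2 ^ Suc e \<and> (\<Sum>j\<in>{1..n}-{i}. X j \<omega>) > real n * c}"
  let ?T = "{\<omega>\<in>space M. \<exists>i\<in>{1..n}. \<exists>j\<in>{1..n}. i \<noteq> j \<and> X i \<omega> \<ge> a \<and> X j \<omega> \<ge> a}"
  have U1ev: "?U1 \<in> events" by (intro sets.finite_UN) (auto intro!: ev_ge)
  have U2ev: "?U2 \<in> events" by (intro sets.finite_UN) (auto intro!: ev_B)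
  have Tev: "?T \<in> events" by (rule two_ev)
  have "prob {\<omega>\<in>space M. (\<Sum>i=1..n. X i \<omega>) > 2 ^ Suc e + real n * c} \<le> prob (?U1 \<union> ?U2 \<union> ?T)"
  proof (rule finite_measure_mono_AE)
    show "?U1 \<union> ?U2 \<union> ?T \<in> events" using U1ev U2ev Tev by (intro sets.Un)
    show "AE \<omega> in M. \<omega> \<in> {\<omega>\<in>space M. (\<Sum>i=1..n. X i \<omega>) > 2 ^ Suc e + real n * c} \<longrightarrow> \<omega> \<in> ?U1 \<union> ?U2 \<union> ?T"
      using AE_all[of n]
    proof (rule AE_mp, intro AE_I2 impI)
      fix \<omega> assume w: "\<omega> \<in> space M" "\<forall>i\<in>{1..n}. (\<exists>k. X i \<omega> = 2 ^ Suc k) \<and> X i \<omega> \<ge> 0"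
        "\<omega> \<in> {\<omega>\<in>space M. (\<Sum>i=1..n. X i \<omega>) > 2 ^ Suc e + real n * c}"
      have S: "(\<Sum>i=1..n. X i \<omega>) > N + real n * c" using w(3) unfolding N_def by simp
      show "\<omega> \<in> ?U1 \<union> ?U2 \<union> ?T"
      proof (rule ccontr)
        assume nin: "\<omega> \<notin> ?U1 \<union> ?U2 \<union> ?T"
        have small: "X i \<omega> \<le> N / 2" if i: "i \<in> {1..n}" for i
        proof -
          have "\<exists>k. X i \<omega> = 2 ^ Suc k" using w(2) i by blast
          then obtain k where k: "X i \<omega> = 2 ^ Suc k" by blast
          have "\<not> X i \<omega> \<ge> 2 ^ Suc (Suc e)" using nin w(1) i by blast
          then have lt: "X i \<omega> < 2 ^ Suc (Suc e)" by linarith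
          have ne: "X i \<omega> \<noteq> 2 ^ Suc e"
          proof
            assume eq: "X i \<omega> = 2 ^ Suc e"
            have "(\<Sum>j\<in>{1..n}-{i}. X j \<omega>) = (\<Sum>i=1..n. X i \<omega>) - X i \<omega>"
              using i by (simp add: sum_diff1)
            then have "(\<Sum>j\<in>{1..n}-{i}. X j \<omega>) > real n * c" using S eq unfolding N_def by simp
            then show False using nin w(1) i eq by auto
          qed
          have "Suc k < Suc (Suc e)" using lt k by (simp add: power_strict_increasing_iff[of "2::real", symmetric])
          moreover have "Suc k \<noteq> Suc e" using ne k by auto
          ultimately have "Suc k \<le> e" by simp
          then have "(2::real) ^ Suc k \<le> 2 ^ e" by (rule power_increasing) simp
          then show ?thesis using k unfolding N_def by simp
        qed
        have "\<omega> \<notin> ?T" using nin by blast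
        then have noT: "\<not>(\<exists>i\<in>{1..n}. \<exists>j\<in>{1..n}. i \<noteq> j \<and> X i \<omega> \<ge> a \<and> X j \<omega> \<ge> a)"
          using w(1) by simp
        have ab: "a \<le> N / 2" unfolding a_def using N0 n by (simp add: field_simps)
        have "(\<Sum>i=1..n. X i \<omega>) \<le> N / 2 + (real n - 1) * a"
          by (rule comb[OF _ ab _ noT]) (use small n in auto)
        also have "\<dots> < N"
        proof -
          have "(real n - 1) * a < real n * a" using a0 by simp
          also have "real n * a = N / 2" unfolding a_def using n by simp
          finally show ?thesis by simp
        qed
        moreover have "real n * c > 0" using n c by simp
        ultimately show False using S by linarith
      qed
    qed
  qed
  also have "\<dots> \<le> prob ?U1 + prob ?U2 + prob ?T"
    using measure_Un_le[OF sets.Un[OF U1ev U2ev] Tev] measure_Un_le[OF U1ev U2ev] by linarith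
  also have "prob ?U1 \<le> real n / 2 ^ Suc e"
  proof -
    have "prob ?U1 \<le> (\<Sum>i\<in>{1..n}. prob {\<omega>\<in>space M. X i \<omega> \<ge> 2 ^ Suc (Suc e)})"
      by (rule finite_measure_subadditive_finite) (auto intro!: ev_ge)
    also have "\<dots> = (\<Sum>i\<in>{1..n}. 1 / 2 ^ Suc e)"
      by (intro sum.cong refl tail_ge) simp
    also have "\<dots> = real n / 2 ^ Suc e" by simp
    finally show ?thesis .
  qed
  also have "prob ?U2 \<le> real n * FF (n - 1) (real n * c) / 2 ^ Suc e"
  proof -
    have "prob ?U2 \<le> (\<Sum>i\<in>{1..n}. prob {\<omega>\<in>space M. X i \<omega> = 2 ^ Suc e \<and> (\<Sum>j\<in>{1..n}-{i}. X j \<omega>) > real n * c})"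
      by (rule finite_measure_subadditive_finite) (auto intro!: ev_B)
    also have "\<dots> = (\<Sum>i\<in>{1..n}. (1/2) ^ Suc e * FF (n - 1) (real n * c))"
    proof (rule sum.cong[OF refl])
      fix i assume i: "i \<in> {1..n}"
      show "prob {\<omega>\<in>space M. X i \<omega> = 2 ^ Suc e \<and> (\<Sum>j\<in>{1..n}-{i}. X j \<omega>) > real n * c} = (1/2) ^ Suc e * FF (n - 1) (real n * c)"
        by (rule Bi_prob[OF _ i]) (use n in simp)
    qed
    also have "\<dots> = real n * FF (n - 1) (real n * c) / 2 ^ Suc e" by (simp add: power_one_over)
    finally show ?thesis .
  qed
  also have "prob ?T \<le> real n ^ 2 * (16 / a^2)" by (rule two_bound[OF a0])
  finally show ?thesis unfolding a_def N_def by simp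
qed


lemma lower_ii:
  assumes n: "n \<ge> 2" and c: "c > 0" and N: "2 ^ Suc e > real n * c"
  shows "prob {\<omega>\<in>space M. (\<Sum>i=1..n. X i \<omega>) > 2 ^ Suc e + real n * c}
     \<ge> real n / 2 ^ Suc e + real n * FF (n - 1) (real n * c) / 2 ^ Suc e
        - real (2 * n) ^ 2 * (16 / (2 ^ Suc e)^2)"
proof -
  define N :: real where "N = 2 ^ Suc e"
  have N0: "N > 0" unfolding N_def by simp
  define A where "A i = {\<omega>\<in>space M. X i \<omega> \<ge> 2 ^ Suc (Suc e)}" for i
  define B where "B i = {\<omega>\<in>space M. X i \<omega> = 2 ^ Suc e \<and> (\<Sum>j\<in>{1..n}-{i}. X j \<omega>) > real n * c}" for i
  define E where "E p = (if snd p then A (fst p) else B (fst p))" for p :: "nat \<times> bool"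
  define I where "I = {1..n} \<times> (UNIV :: bool set)"
  have finI: "finite I" unfolding I_def by simp
  have cardI: "card I = 2 * n" unfolding I_def by (simp add: card_cartesian_product)
  have Eev: "E p \<in> events" if "p \<in> I" for p
    using that unfolding E_def A_def B_def I_def by (auto intro!: ev_ge ev_B)
  have EN: "E p \<subseteq> {\<omega>\<in>space M. X (fst p) \<omega> \<ge> N}" for p
  proof
    fix \<omega> assume w: "\<omega> \<in> E p"
    have p0: "(0::real) \<le> 2 ^ e" by simp
    show "\<omega> \<in> {\<omega>\<in>space M. X (fst p) \<omega> \<ge> N}"
    proof (cases "snd p")
      case True
      then have a: "\<omega> \<in> space M" "X (fst p) \<omega> \<ge> 4 * 2 ^ e" using w unfolding E_def A_def by auto
      moreover have "X (fst p) \<omega> \<ge> 2 * 2 ^ e" using a(2) p0 by linarith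
      ultimately show ?thesis unfolding N_def by simp
    next
      case False
      then show ?thesis using w unfolding E_def B_def N_def by auto
    qed
  qed
  have q: "prob (E p \<inter> E p') \<le> 16 / N^2" if p: "p \<in> I" "p' \<in> I" "p \<noteq> p'" for p p'
  proof (cases "fst p = fst p'")
    case True
    then have "snd p \<noteq> snd p'" using p by (auto simp: prod_eq_iff)
    moreover have "A i \<inter> B i = {}" for i
    proof -
      have "(2::real) ^ Suc e < 2 ^ Suc (Suc e)" by (rule power_strict_increasing) auto
      then show ?thesis unfolding A_def B_def by auto
    qed
    ultimately have "E p \<inter> E p' = {}" using True unfolding E_def by (cases "snd p") auto
    then show ?thesis by simp
  next
    case False
    have i1: "fst p \<ge> 1" "fst p' \<ge> 1" using p unfolding I_def by auto
    have "prob (E p \<inter> E p') \<le> prob {\<omega>\<in>space M. X (fst p) \<omega> \<ge> N \<and> X (fst p') \<omega> \<ge> N}"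
    proof (rule finite_measure_mono)
      show "E p \<inter> E p' \<subseteq> {\<omega>\<in>space M. X (fst p) \<omega> \<ge> N \<and> X (fst p') \<omega> \<ge> N}"
        using EN[of p] EN[of p'] by auto
      have "{\<omega>\<in>space M. X (fst p) \<omega> \<ge> N \<and> X (fst p') \<omega> \<ge> N} =
            {\<omega>\<in>space M. X (fst p) \<omega> \<ge> N} \<inter> {\<omega>\<in>space M. X (fst p') \<omega> \<ge> N}" by auto
      then show "{\<omega>\<in>space M. X (fst p) \<omega> \<ge> N \<and> X (fst p') \<omega> \<ge> N} \<in> events"
        using ev_ge[OF i1(1)] ev_ge[OF i1(2)] by simp
    qed
    also have "\<dots> \<le> 16 / N^2" by (rule pair_bound) (use i1 False N0 in auto)
    finally show ?thesis .
  qed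
  have bon: "prob (\<Union>p\<in>I. E p) \<ge> (\<Sum>p\<in>I. prob (E p)) - real (card I)^2 * (16 / N^2)"
    by (rule bonf[OF finI Eev _ q]) simp_all
  have sumE: "(\<Sum>p\<in>I. prob (E p)) = real n / 2 ^ Suc e + real n * FF (n - 1) (real n * c) / 2 ^ Suc e"
  proof -
    have "(\<Sum>p\<in>I. prob (E p)) = (\<Sum>i\<in>{1..n}. \<Sum>b\<in>UNIV. prob (E (i, b)))"
      unfolding I_def by (rule sum.cartesian_product')
    also have "\<dots> = (\<Sum>i\<in>{1..n}. 1 / 2 ^ Suc e + (1/2) ^ Suc e * FF (n - 1) (real n * c))"
    proof (rule sum.cong[OF refl])
      fix i assume i: "i \<in> {1..n}"
      have "(\<Sum>b\<in>UNIV. prob (E (i, b))) = prob (A i) + prob (B i)"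
        unfolding UNIV_bool E_def by simp
      also have "prob (A i) = 1 / 2 ^ Suc e" unfolding A_def by (rule tail_ge) (use i in simp)
      also have "prob (B i) = (1/2) ^ Suc e * FF (n - 1) (real n * c)" unfolding B_def
        by (rule Bi_prob[OF _ i]) (use n in simp)
      finally show "(\<Sum>b\<in>UNIV. prob (E (i, b))) = 1 / 2 ^ Suc e + (1/2) ^ Suc e * FF (n - 1) (real n * c)" .
    qed
    also have "\<dots> = real n / 2 ^ Suc e + real n * FF (n - 1) (real n * c) / 2 ^ Suc e"
      by (simp add: power_one_over algebra_simps)
    finally show ?thesis .
  qed
  have "prob (\<Union>p\<in>I. E p) \<le> prob {\<omega>\<in>space M. (\<Sum>i=1..n. X i \<omega>) > 2 ^ Suc e + real n * c}"
  proof (rule finite_measure_mono_AE)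
    show "{\<omega>\<in>space M. (\<Sum>i=1..n. X i \<omega>) > 2 ^ Suc e + real n * c} \<in> events" by (rule evS_gt)
    show "AE \<omega> in M. \<omega> \<in> (\<Union>p\<in>I. E p) \<longrightarrow> \<omega> \<in> {\<omega>\<in>space M. (\<Sum>i=1..n. X i \<omega>) > 2 ^ Suc e + real n * c}"
      using AE_all[of n]
    proof (rule AE_mp, intro AE_I2 impI)
      fix \<omega> assume w: "\<omega> \<in> space M" "\<forall>i\<in>{1..n}. (\<exists>k. X i \<omega> = 2 ^ Suc k) \<and> X i \<omega> \<ge> 0"
        "\<omega> \<in> (\<Union>p\<in>I. E p)"
      then obtain i b where ib: "(i, b) \<in> I" "\<omega> \<in> E (i, b)" by auto
      have i: "i \<in> {1..n}" using ib unfolding I_def by auto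
      have split: "(\<Sum>i=1..n. X i \<omega>) = X i \<omega> + (\<Sum>j\<in>{1..n}-{i}. X j \<omega>)"
        using i by (simp add: sum_diff1)
      have nn: "(\<Sum>j\<in>{1..n}-{i}. X j \<omega>) \<ge> 0" using w(2) by (intro sum_nonneg) auto
      show "\<omega> \<in> {\<omega>\<in>space M. (\<Sum>i=1..n. X i \<omega>) > 2 ^ Suc e + real n * c}"
      proof (cases b)
        case True
        then have "X i \<omega> \<ge> 2 ^ Suc (Suc e)" using ib unfolding E_def A_def by auto
        then have "X i \<omega> \<ge> 2 * 2 ^ Suc e" by simp
        then show ?thesis using split nn N w(1) by simp
      next
        case False
        then have "X i \<omega> = 2 ^ Suc e" "(\<Sum>j\<in>{1..n}-{i}. X j \<omega>) > real n * c"
          using ib unfolding E_def B_def by auto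
        then show ?thesis using split w(1) by simp
      qed
    qed
  qed
  then show ?thesis using bon sumE cardI unfolding N_def by simp
qed


lemma alg_up: assumes "(N::real) > 0" "(n::real) > 0"
  shows "(n / N + n * Q / N + n ^ 2 * (16 / (N / (2 * n))^2)) * (N / n) = 1 + Q + 64 * n^3 / N"
  using assms by (simp add: field_simps power2_eq_square power3_eq_cube)

lemma alg_lo: assumes "(N::real) > 0" "(n::real) > 0"
  shows "(n / N + n * Q / N - (2 * n) ^ 2 * (16 / N^2)) * (N / n) = 1 + Q - 64 * n / N"
  using assms by (simp add: field_simps power2_eq_square)

lemma sup_eq:
  assumes n: "n \<ge> 2" and c: "c > 0" and N: "2 ^ (m + K) > real n * c" and K: "K = nat \<lceil>log 2 (real n)\<rceil>"
  shows "(SUP x\<in>{2 ^ m / gam n + c ..< 2 ^ (m + 1) / gam n}.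
           prob {\<omega>\<in>space M. (\<Sum>i=1..n. X i \<omega>) / real n > x} * normf n x)
         = prob {\<omega>\<in>space M. (\<Sum>i=1..n. X i \<omega>) > 2 ^ (m + K) + real n * c} * (2 ^ (m + K) / real n)"
proof -
  define N :: real where "N = 2 ^ (m + K)"
  have N0: "N > 0" unfolding N_def by simp
  have npos: "real n > 0" using n by simp
  have g: "gam n = real n / 2 ^ K" unfolding K using gam_eq[OF n] .
  have lo: "2 ^ m / gam n = N / real n" unfolding g N_def by (simp add: power_add)
  have hi: "2 ^ (m + 1) / gam n = 2 * N / real n" unfolding g N_def by (simp add: power_add)
  define g where "g x = prob {\<omega>\<in>space M. (\<Sum>i=1..n. X i \<omega>) / real n > x} * normf n x" for x
  define L where "L = N / real n + c"
  have set_eq: "{\<omega>\<in>space M. (\<Sum>i=1..n. X i \<omega>) / real n > x} = {\<omega>\<in>space M. (\<Sum>i=1..n. X i \<omega>) > real n * x}" for x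
    using npos by (auto simp: field_simps)
  have gx: "g x = prob {\<omega>\<in>space M. (\<Sum>i=1..n. X i \<omega>) > real n * x} * (N / real n)"
    if x: "x \<in> {N / real n + c ..< 2 * N / real n}" for x
  proof -
    have x1: "real n * x \<ge> N + real n * c" using x npos by (simp add: field_simps)
    have x2: "real n * x < 2 * N" using x npos by (simp add: field_simps)
    have x0: "x > 0" using x1 N0 c npos by (smt (verit) mult_pos_pos mult_le_0_iff)
    have ncp: "real n * c > 0" using npos c by simp
    have j1: "2 ^ (m + K) \<le> real n * x" using x1 ncp unfolding N_def by linarith
    have j2: "real n * x < 2 ^ Suc (m + K)" using x2 unfolding N_def by simp
    have "normf n x = 2 ^ (m + K) / real n"
      by (rule normf_eq(2)[OF n x0 j1 j2])
    then show ?thesis unfolding g_def set_eq N_def by simp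
  qed
  have Lin: "L \<in> {N / real n + c ..< 2 * N / real n}"
    unfolding L_def using N npos unfolding N_def by (simp add: field_simps)
  have gL: "g L = prob {\<omega>\<in>space M. (\<Sum>i=1..n. X i \<omega>) > N + real n * c} * (N / real n)"
  proof -
    have nL: "real n * L = N + real n * c" unfolding L_def using npos by (simp add: field_simps)
    show ?thesis using gx[OF Lin] by (simp only: nL)
  qed
  have "Sup (g ` {N / real n + c ..< 2 * N / real n}) = g L"
  proof (rule cSup_eq_maximum)
    show "g L \<in> g ` {N / real n + c ..< 2 * N / real n}" using Lin by blast
    fix y assume "y \<in> g ` {N / real n + c ..< 2 * N / real n}"
    then obtain x where x: "x \<in> {N / real n + c ..< 2 * N / real n}" and y: "y = g x" by blast
    have x1: "real n * x \<ge> N + real n * c" using x npos by (simp add: field_simps)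
    have "prob {\<omega>\<in>space M. (\<Sum>i=1..n. X i \<omega>) > real n * x} \<le> prob {\<omega>\<in>space M. (\<Sum>i=1..n. X i \<omega>) > N + real n * c}"
      by (rule finite_measure_mono) (use x1 evS_gt in auto)
    then show "y \<le> g L" unfolding y gx[OF x] gL using N0 npos by (intro mult_right_mono) auto
  qed
  then show ?thesis unfolding lo hi g_def[symmetric] gL N_def by simp
qed


lemma seq0: "(\<lambda>m. C / 2 ^ (m + K) :: real) \<longlonglongrightarrow> 0"
proof -
  have A: "(\<lambda>m. (C / 2 ^ K) * (1/2::real) ^ m) \<longlonglongrightarrow> (C / 2 ^ K) * 0"
    by (intro tendsto_mult tendsto_const LIMSEQ_realpow_zero) simp_all
  have B: "(\<lambda>m. (C / 2 ^ K) * (1/2::real) ^ m) = (\<lambda>m. C / 2 ^ (m + K))"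
    by (rule ext) (simp add: power_add power_one_over field_simps)
  show ?thesis using A[unfolded B] by simp
qed

lemma part_ii:
  assumes n: "n \<ge> 2" and c: "c > 1"
  shows "(\<lambda>m. SUP x\<in>{2 ^ m / gam n + c ..< 2 ^ (m + 1) / gam n}.
            prob {\<omega>\<in>space M. (\<Sum>i=1..n. X i \<omega>) / real n > x} * normf n x)
          \<longlonglongrightarrow> 1 + FF (n - 1) (real n * c)"
proof -
  define K where "K = nat \<lceil>log 2 (real n)\<rceil>"
  define Q where "Q = FF (n - 1) (real n * c)"
  have c0: "c > 0" using c by simp
  have npos: "real n > 0" using n by simp
  obtain m0 where m0: "real n * c < 2 ^ m0" using real_arch_pow[of 2 "real n * c"] by auto
  let ?h = "\<lambda>m. SUP x\<in>{2 ^ m / gam n + c ..< 2 ^ (m + 1) / gam n}.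
            prob {\<omega>\<in>space M. (\<Sum>i=1..n. X i \<omega>) / real n > x} * normf n x"
  have bnd: "1 + Q - 64 * real n / 2 ^ (m + K) \<le> ?h m \<and> ?h m \<le> 1 + Q + 64 * real n ^ 3 / 2 ^ (m + K)"
    if m: "m \<ge> Suc m0" for m
  proof -
    define N :: real where "N = 2 ^ (m + K)"
    have N0: "N > 0" unfolding N_def by simp
    have pw: "(2::real) ^ m0 \<le> 2 ^ (m + K)" by (rule power_increasing) (use m in auto)
    have Nnc: "N > real n * c" using pw m0 unfolding N_def by linarith
    obtain e where e: "m + K = Suc e" using m by (cases "m + K") auto
    have Ne: "N = 2 ^ Suc e" unfolding N_def e ..
    have h: "?h m = prob {\<omega>\<in>space M. (\<Sum>i=1..n. X i \<omega>) > N + real n * c} * (N / real n)"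
      unfolding N_def by (rule sup_eq[OF n c0 _ K_def]) (use Nnc N_def in simp)
    have up: "prob {\<omega>\<in>space M. (\<Sum>i=1..n. X i \<omega>) > N + real n * c}
       \<le> real n / N + real n * Q / N + real n ^ 2 * (16 / (N / (2 * real n))^2)"
      unfolding Ne Q_def by (rule upper_ii[OF n c0]) (use Nnc Ne in simp)
    have lo: "prob {\<omega>\<in>space M. (\<Sum>i=1..n. X i \<omega>) > N + real n * c}
       \<ge> real n / N + real n * Q / N - (2 * real n) ^ 2 * (16 / N^2)"
      using lower_ii[OF n c0, of e] Nnc unfolding Ne Q_def by simp
    have "?h m \<le> (real n / N + real n * Q / N + real n ^ 2 * (16 / (N / (2 * real n))^2)) * (N / real n)"
      unfolding h using up N0 npos by (intro mult_right_mono) auto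
    also have "\<dots> = 1 + Q + 64 * real n ^ 3 / N" by (rule alg_up[OF N0 npos])
    finally have U: "?h m \<le> 1 + Q + 64 * real n ^ 3 / N" .
    have "?h m \<ge> (real n / N + real n * Q / N - (2 * real n) ^ 2 * (16 / N^2)) * (N / real n)"
      unfolding h using lo N0 npos by (intro mult_right_mono) auto
    moreover have "(real n / N + real n * Q / N - (2 * real n) ^ 2 * (16 / N^2)) * (N / real n) = 1 + Q - 64 * real n / N"
      by (rule alg_lo[OF N0 npos])
    ultimately have L: "?h m \<ge> 1 + Q - 64 * real n / N" by simp
    show ?thesis using U L unfolding N_def by simp
  qed
  have l1: "(\<lambda>m. 1 + Q - 64 * real n / 2 ^ (m + K)) \<longlonglongrightarrow> 1 + Q"
    using tendsto_diff[OF tendsto_const seq0[of "64 * real n" K]] by simp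
  have l2: "(\<lambda>m. 1 + Q + 64 * real n ^ 3 / 2 ^ (m + K)) \<longlonglongrightarrow> 1 + Q"
    using tendsto_add[OF tendsto_const seq0[of "64 * real n ^ 3" K]] by simp
  have ev: "eventually (\<lambda>m. 1 + Q - 64 * real n / 2 ^ (m + K) \<le> ?h m \<and> ?h m \<le> 1 + Q + 64 * real n ^ 3 / 2 ^ (m + K)) sequentially"
    unfolding eventually_sequentially using bnd by blast
  show ?thesis unfolding Q_def[symmetric]
    by (rule tendsto_sandwich[OF _ _ l1 l2]) (use ev in \<open>auto elim: eventually_mono\<close>)
qed

lemma Q_pos:
  assumes n: "n \<ge> 2" and c: "c > 0"
  shows "prob {\<omega>\<in>space M. (\<Sum>i=1..n-1. X i \<omega>) > real n * c} = FF (n - 1) (real n * c)"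
    and "FF (n - 1) (real n * c) > 0"
proof -
  show eq: "prob {\<omega>\<in>space M. (\<Sum>i=1..n-1. X i \<omega>) > real n * c} = FF (n - 1) (real n * c)"
    using sumdist[of "{1..n-1}" "real n * c"] by auto
  obtain j where j: "real n * c < 2 ^ j" using real_arch_pow[of 2 "real n * c"] by auto
  have "0 < 1 / (2::real) ^ j" by simp
  also have "1 / 2 ^ j = prob {\<omega>\<in>space M. X 1 \<omega> > 2 ^ j}" using tail_gt[of 1 j] by simp
  also have "\<dots> \<le> prob {\<omega>\<in>space M. (\<Sum>i=1..n-1. X i \<omega>) > real n * c}"
  proof (rule finite_measure_mono_AE)
    show "{\<omega>\<in>space M. (\<Sum>i=1..n-1. X i \<omega>) > real n * c} \<in> events" by (rule evS_gt)
    show "AE \<omega> in M. \<omega> \<in> {\<omega>\<in>space M. X 1 \<omega> > 2 ^ j} \<longrightarrow> \<omega> \<in> {\<omega>\<in>space M. (\<Sum>i=1..n-1. X i \<omega>) > real n * c}"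
      using AE_all[of "n - 1"]
    proof (rule AE_mp, intro AE_I2 impI)
      fix \<omega> assume w: "\<omega> \<in> space M" "\<forall>i\<in>{1..n-1}. (\<exists>k. X i \<omega> = 2 ^ Suc k) \<and> X i \<omega> \<ge> 0"
        "\<omega> \<in> {\<omega>\<in>space M. X 1 \<omega> > 2 ^ j}"
      have "X 1 \<omega> \<le> (\<Sum>i=1..n-1. X i \<omega>)"
        by (rule member_le_sum) (use n w(2) in auto)
      then show "\<omega> \<in> {\<omega>\<in>space M. (\<Sum>i=1..n-1. X i \<omega>) > real n * c}" using w j by auto
    qed
  qed
  finally show "FF (n - 1) (real n * c) > 0" using eq by simp
qed

end

theorem theorem2:
  fixes M :: "'a measure" and X :: "nat \<Rightarrow> 'a \<Rightarrow> real" and n :: nat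
  assumes iid: "st_petersburg_iid M X"
    and n2: "n \<ge> 2"
  shows "(\<forall>\<delta>::real>0.
            ((\<lambda>x. measure M {\<omega>\<in>space M. partial_sum X n \<omega> / real n > x} * normf n x)
              \<longlongrightarrow> 1) (at_top \<sqinter> principal {x. frac (log 2 (gam n * x)) \<ge> \<delta>}))
       \<and> (\<forall>c::real>1.
            (\<lambda>m::nat. SUP x\<in>{2 ^ m / gam n + c ..< 2 ^ (m + 1) / gam n}.
                 measure M {\<omega>\<in>space M. partial_sum X n \<omega> / real n > x} * normf n x)
              \<longlonglongrightarrow> 1 + measure M {\<omega>\<in>space M. partial_sum X (n - 1) \<omega> > real n * c}
            \<and> 1 + measure M {\<omega>\<in>space M. partial_sum X (n - 1) \<omega> > real n * c} > 1)"
proof -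
  have "stp M X" using iid unfolding stp_def stp_axioms_def st_petersburg_iid_def by blast
  then interpret stp M X .
  show ?thesis
  proof (intro conjI allI impI)
    fix \<delta> :: real assume "\<delta> > 0"
    then show "((\<lambda>x. measure M {\<omega>\<in>space M. partial_sum X n \<omega> / real n > x} * normf n x)
              \<longlongrightarrow> 1) (at_top \<sqinter> principal {x. frac (log 2 (gam n * x)) \<ge> \<delta>})"
      unfolding partial_sum_def by (rule part_i[OF n2])
  next
    fix c :: real assume c: "c > 1"
    have q: "measure M {\<omega>\<in>space M. partial_sum X (n - 1) \<omega> > real n * c} = FF (n - 1) (real n * c)"
      unfolding partial_sum_def using Q_pos(1)[OF n2] c by simp
    show "(\<lambda>m::nat. SUP x\<in>{2 ^ m / gam n + c ..< 2 ^ (m + 1) / gam n}.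
                 measure M {\<omega>\<in>space M. partial_sum X n \<omega> / real n > x} * normf n x)
              \<longlonglongrightarrow> 1 + measure M {\<omega>\<in>space M. partial_sum X (n - 1) \<omega> > real n * c}"
      unfolding q unfolding partial_sum_def by (rule part_ii[OF n2 c])
    show "1 + measure M {\<omega>\<in>space M. partial_sum X (n - 1) \<omega> > real n * c} > 1"
      unfolding q using Q_pos(2)[OF n2] c by simp
  qed
qed

end
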